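(* Let $\alpha\geq1$ and $\phi(x):=(1+|x|^2)^{-\alpha}$ on $\mathbb{R}^3$. Then there is a constant $C$ such that for every $x,y\in\mathbb{R}^3$, $$\sup_{s\in[0,1]}|\nabla\phi(x-sy)|\leq C\alpha(1+|y|^{2\alpha})|\phi(x)|.$$ *)

theory Defs
  imports "HOL-Analysis.Analysis"
begin

definition gradient :: "('a::real_inner \<Rightarrow> real) \<Rightarrow> 'a \<Rightarrow> 'a" where
  "gradient f x = (THE D. GDERIV f x :> D)"

definition phiA :: "real \<Rightarrow> real ^ 3 \<Rightarrow> real" where
  "phiA \<alpha> x = (1 + (norm x)\<^sup>2) powr (- \<alpha>)"

end

theory Submission
  imports Defs
begin
lemma g1: "GDERIV (\<lambda>x::real^3. 1 + (norm x)\<^sup>2) z :> (2 *\<^sub>R z)"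
  unfolding gderiv_def power2_norm_eq_inner
  by (rule derivative_eq_intros | simp add: inner_commute algebra_simps)+
lemma g2: "DERIV (\<lambda>t. t powr (-a)) (1 + (norm z)\<^sup>2) :> (-a * (1 + (norm z)\<^sup>2) powr (-a - 1))"
  apply (rule derivative_eq_intros | simp add: add_pos_nonneg)+
  done
lemma grad: "gradient (phiA a) z = ((-a * (1 + (norm z)\<^sup>2) powr (-a - 1)) *\<^sub>R (2 *\<^sub>R z))"
proof -
  have G: "GDERIV (phiA a) z :> ((-a * (1 + (norm z)\<^sup>2) powr (-a - 1)) *\<^sub>R (2 *\<^sub>R z))"
    unfolding phiA_def[abs_def] by (rule GDERIV_DERIV_compose[OF g1 g2])
  have U: "D = D'" if "GDERIV (phiA a) z :> D" "GDERIV (phiA a) z :> D'" for D D'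
  proof -
    have "(\<lambda>h. h \<bullet> D) = (\<lambda>h. h \<bullet> D')" using that unfolding gderiv_def by (rule has_derivative_unique)
    then have "(D - D') \<bullet> D = (D - D') \<bullet> D'" by metis
    then have "(D - D') \<bullet> (D - D') = 0" by (simp add: inner_diff_right)
    then show ?thesis by simp
  qed
  show ?thesis unfolding gradient_def using G U by blast
qed
lemma sq2: fixes a b :: real shows "(a+b)^2 \<le> 2*a^2+2*b^2"
proof - have "0 \<le> (a-b)^2" by simp thus ?thesis by (simp add: power2_eq_square algebra_simps) qed
lemma aux3: fixes X A U :: real assumes "X \<le> 2*A+2*U" "0 \<le> A" "0 \<le> U" shows "1+X \<le> 2*(1+A)*(1+U)"
proof - have "0 \<le> A*U" using assms by simp thus ?thesis using assms(1) by (simp add: algebra_simps) qed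
lemma sq1: fixes a :: real shows "2*a \<le> 1 + a^2"
proof - have "0 \<le> (a-1)^2" by simp thus ?thesis by (simp add: power2_eq_square algebra_simps) qed
lemma gb: assumes "a \<ge> 1" shows "norm (gradient (phiA a) z) \<le> a * phiA a z"
proof -
  define t where "t = 1 + (norm z)\<^sup>2"
  have tp: "t > 0" unfolding t_def by (simp add: add_pos_nonneg)
  have nz: "2 * norm z \<le> t" unfolding t_def by (rule sq1)
  have "norm (gradient (phiA a) z) = a * t powr (-a - 1) * (2 * norm z)"
    unfolding grad t_def using assms by (simp add: abs_mult)
  also have "\<dots> \<le> a * t powr (-a - 1) * t"
    using assms nz by (intro mult_left_mono) auto
  also have "\<dots> = a * t powr (-a)" using tp by (simp add: powr_diff powr_minus field_simps)
  finally show ?thesis unfolding phiA_def t_def .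
qed

lemma pb: assumes "a \<ge> 1" "0 \<le> s" "s \<le> 1"
  shows "phiA a (x - s *\<^sub>R y) \<le> 4 powr a * (1 + norm y powr (2 * a)) * phiA a x"
proof -
  define tx where "tx = 1 + (norm x)\<^sup>2"
  define tz where "tz = 1 + (norm (x - s *\<^sub>R y))\<^sup>2"
  define u where "u = (norm y)\<^sup>2"
  have txp: "tx > 0" unfolding tx_def by (simp add: add_pos_nonneg)
  have tzp: "tz > 0" unfolding tz_def by (simp add: add_pos_nonneg)
  have u0: "u \<ge> 0" unfolding u_def by simp
  have n1: "norm x \<le> norm (x - s *\<^sub>R y) + norm y"
  proof -
    have "norm x \<le> norm (x - s *\<^sub>R y) + norm (s *\<^sub>R y)" by (metis norm_triangle_sub add.commute)
    moreover have "norm (s *\<^sub>R y) \<le> norm y" using assms by (simp add: mult_left_le_one_le)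
    ultimately show ?thesis by linarith
  qed
  have "(norm x)\<^sup>2 \<le> (norm (x - s *\<^sub>R y) + norm y)\<^sup>2" using n1 by (simp add: power_mono)
  also have "\<dots> \<le> 2 * (norm (x - s *\<^sub>R y))\<^sup>2 + 2 * (norm y)\<^sup>2"
    by (rule sq2)
  finally have h0: "(norm x)\<^sup>2 \<le> 2 * (norm (x - s *\<^sub>R y))\<^sup>2 + 2 * (norm y)\<^sup>2" .
  have p: "0 \<le> (norm y)\<^sup>2 * (norm (x - s *\<^sub>R y))\<^sup>2" by simp
  have h: "tx \<le> 2 * tz * (1 + u)" unfolding tx_def tz_def u_def using h0
    by (intro aux3) auto
  have h2: "1 + u \<le> 2 * max 1 u" by simp
  have "tx powr a \<le> (2 * tz * (1 + u)) powr a" using h txp assms by (intro powr_mono2) auto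
  also have "\<dots> = 2 powr a * tz powr a * (1 + u) powr a" using tzp u0 by (simp add: powr_mult)
  finally have A: "tx powr a \<le> 2 powr a * tz powr a * (1 + u) powr a" .
  have "(1 + u) powr a \<le> (2 * max 1 u) powr a" using h2 u0 assms by (intro powr_mono2) auto
  also have "\<dots> = 2 powr a * (max 1 u) powr a" by (simp add: powr_mult)
  also have "(max 1 u) powr a \<le> 1 + u powr a"
    by (cases "u \<le> 1") (auto simp: max_def)
  also have "u powr a = norm y powr (2 * a)" unfolding u_def
    by (simp add: powr_powr[symmetric] powr_realpow[symmetric] )
  finally have B: "(1 + u) powr a \<le> 2 powr a * (1 + norm y powr (2 * a))" by simp
  have "tx powr a \<le> 2 powr a * tz powr a * (2 powr a * (1 + norm y powr (2 * a)))"
    using A B by (meson mult_left_mono order_trans powr_ge_zero mult_nonneg_nonneg)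
  also have "\<dots> = (2 powr a * 2 powr a) * (1 + norm y powr (2 * a)) * tz powr a" by (simp add: mult_ac)
  also have "2 powr a * 2 powr a = 4 powr a" by (simp add: powr_mult[symmetric])
  finally have key: "tx powr a \<le> 4 powr a * (1 + norm y powr (2 * a)) * tz powr a" .
  show ?thesis unfolding phiA_def tx_def[symmetric] tz_def[symmetric] using key txp tzp
    by (simp add: powr_minus field_simps)
qed
theorem lemmaA1:
  fixes \<alpha> :: real
  assumes "\<alpha> \<ge> 1"
  shows "\<exists>C. \<forall>x y :: real ^ 3.
           (SUP s\<in>{0..1::real}. norm (gradient (phiA \<alpha>) (x - s *\<^sub>R y)))
             \<le> C * \<alpha> * (1 + norm y powr (2 * \<alpha>)) * \<bar>phiA \<alpha> x\<bar>"
proof (intro exI allI)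
  fix x y :: "real ^ 3"
  have ab: "\<bar>phiA \<alpha> x\<bar> = phiA \<alpha> x" unfolding phiA_def by simp
  show "(SUP s\<in>{0..1::real}. norm (gradient (phiA \<alpha>) (x - s *\<^sub>R y)))
             \<le> 4 powr \<alpha> * \<alpha> * (1 + norm y powr (2 * \<alpha>)) * \<bar>phiA \<alpha> x\<bar>"
    unfolding ab
  proof (rule cSUP_least)
    show "{0..1::real} \<noteq> {}" by simp
  next
    fix s :: real assume "s \<in> {0..1}"
    then have "phiA \<alpha> (x - s *\<^sub>R y) \<le> 4 powr \<alpha> * (1 + norm y powr (2 * \<alpha>)) * phiA \<alpha> x"
      using assms by (intro pb) auto
    then have "\<alpha> * phiA \<alpha> (x - s *\<^sub>R y) \<le> \<alpha> * (4 powr \<alpha> * (1 + norm y powr (2 * \<alpha>)) * phiA \<alpha> x)"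
      using assms by (intro mult_left_mono) auto
    then show "norm (gradient (phiA \<alpha>) (x - s *\<^sub>R y)) \<le> 4 powr \<alpha> * \<alpha> * (1 + norm y powr (2 * \<alpha>)) * phiA \<alpha> x"
      using gb[OF assms, of "x - s *\<^sub>R y"] by (simp add: mult_ac)
  qed
qed

end
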